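(* If $X$ and $Y$ are metric spaces which are coarsely homotopy equivalent, then $\mathrm{c\text{-}cat}(X)=\mathrm{c\text{-}cat}(Y)$.
   Context: Notation: $\mathbb{R}_+=[0,\infty)$. For metric spaces $X,Y$, a (not necessarily continuous) map $f:X\to Y$ is controlled if for every $r>0$ there is $S>0$ with $d(x,x')<r\Rightarrow d(f(x),f(x'))<S$; proper if preimages of bounded sets are bounded; coarse if both. For a coarse map $q:X\to\mathbb{R}_+$, the $q$-cylinder is $I_qX=\{(x,t)\in X\times\mathbb{R}_+ : t\le q(x)\}$ with the metric restricted from the product (sup) metric, and $i_0(x)=(x,0)$, $i_1(x)=(x,q(x))$. Coarse maps $f,g:X\to Y$ are coarsely homotopic if there exist a coarse $q:X\to\mathbb{R}_+$ and a coarse $H:I_qX\to Y$ with $H\circ i_0=f$, $H\circ i_1=g$. A coarse map $f:X\to Y$ is a coarse homotopy equivalence if there is a coarse map $g:Y\to X$ with $g\circ f$ and $f\circ g$ coarsely homotopic to $1_X$ and $1_Y$; $X,Y$ are then coarsely homotopy equivalent. A subset $A\subseteq X$ is coarsely categorical if there exist coarse maps $\alpha:\mathbb{R}_+\to X$ and $j:A\to\mathbb{R}_+$ such that $\alpha\circ j$ is coarsely homotopic to the inclusion $A\hookrightarrow X$. The (reduced) coarse Lusternik–Schnirelmann category $\mathrm{c\text{-}cat}(X)$ is the least $k$ such that $X$ can be covered by $k+1$ coarsely categorical subsets (and $\infty$ if none exists). *)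

theory Defs
  imports "HOL-Analysis.Analysis" "HOL-Library.Extended_Nat"
begin

text \<open>Metric spaces are given as a carrier with a distance function (locale Metric_space).
  Maps are arbitrary functions; only their values on the carrier matter.\<close>

definition controlled_map :: "'a set \<Rightarrow> ('a \<Rightarrow> 'a \<Rightarrow> real) \<Rightarrow> 'b set \<Rightarrow> ('b \<Rightarrow> 'b \<Rightarrow> real) \<Rightarrow> ('a \<Rightarrow> 'b) \<Rightarrow> bool" where
  "controlled_map M d N e f \<longleftrightarrow>
     (\<forall>r>0. \<exists>S>0. \<forall>x\<in>M. \<forall>x'\<in>M. d x x' < r \<longrightarrow> e (f x) (f x') < S)"

definition proper_map :: "'a set \<Rightarrow> ('a \<Rightarrow> 'a \<Rightarrow> real) \<Rightarrow> 'b set \<Rightarrow> ('b \<Rightarrow> 'b \<Rightarrow> real) \<Rightarrow> ('a \<Rightarrow> 'b) \<Rightarrow> bool" where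
  "proper_map M d N e f \<longleftrightarrow>
     (\<forall>B. B \<subseteq> N \<longrightarrow> Metric_space.mbounded N e B \<longrightarrow> Metric_space.mbounded M d {x\<in>M. f x \<in> B})"

definition coarse_map :: "'a set \<Rightarrow> ('a \<Rightarrow> 'a \<Rightarrow> real) \<Rightarrow> 'b set \<Rightarrow> ('b \<Rightarrow> 'b \<Rightarrow> real) \<Rightarrow> ('a \<Rightarrow> 'b) \<Rightarrow> bool" where
  "coarse_map M d N e f \<longleftrightarrow> f ` M \<subseteq> N \<and> controlled_map M d N e f \<and> proper_map M d N e f"

abbreviation Rplus :: "real set" where "Rplus \<equiv> {0..}"

definition cylinder :: "'a set \<Rightarrow> ('a \<Rightarrow> real) \<Rightarrow> ('a \<times> real) set" where
  "cylinder M q = {(x, t). x \<in> M \<and> 0 \<le> t \<and> t \<le> q x}"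

definition cyl_dist :: "('a \<Rightarrow> 'a \<Rightarrow> real) \<Rightarrow> ('a \<times> real) \<Rightarrow> ('a \<times> real) \<Rightarrow> real" where
  "cyl_dist d p p' = max (d (fst p) (fst p')) \<bar>snd p - snd p'\<bar>"

definition coarsely_homotopic :: "'a set \<Rightarrow> ('a \<Rightarrow> 'a \<Rightarrow> real) \<Rightarrow> 'b set \<Rightarrow> ('b \<Rightarrow> 'b \<Rightarrow> real) \<Rightarrow> ('a \<Rightarrow> 'b) \<Rightarrow> ('a \<Rightarrow> 'b) \<Rightarrow> bool" where
  "coarsely_homotopic M d N e f g \<longleftrightarrow>
     (\<exists>q H. coarse_map M d Rplus dist q \<and>
            coarse_map (cylinder M q) (cyl_dist d) N e H \<and>
            (\<forall>x\<in>M. H (x, 0) = f x) \<and> (\<forall>x\<in>M. H (x, q x) = g x))"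

definition coarse_homotopy_equivalent :: "'a set \<Rightarrow> ('a \<Rightarrow> 'a \<Rightarrow> real) \<Rightarrow> 'b set \<Rightarrow> ('b \<Rightarrow> 'b \<Rightarrow> real) \<Rightarrow> bool" where
  "coarse_homotopy_equivalent M d N e \<longleftrightarrow>
     (\<exists>f g. coarse_map M d N e f \<and> coarse_map N e M d g \<and>
            coarsely_homotopic M d M d (g \<circ> f) id \<and>
            coarsely_homotopic N e N e (f \<circ> g) id)"

definition coarsely_categorical :: "'a set \<Rightarrow> ('a \<Rightarrow> 'a \<Rightarrow> real) \<Rightarrow> 'a set \<Rightarrow> bool" where
  "coarsely_categorical M d A \<longleftrightarrow> A \<subseteq> M \<and>
     (\<exists>\<alpha> j. coarse_map Rplus dist M d \<alpha> \<and> coarse_map A d Rplus dist j \<and>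
            coarsely_homotopic A d M d (\<alpha> \<circ> j) id)"

definition ccat_cover :: "'a set \<Rightarrow> ('a \<Rightarrow> 'a \<Rightarrow> real) \<Rightarrow> nat \<Rightarrow> bool" where
  "ccat_cover M d k \<longleftrightarrow>
     (\<exists>U :: nat \<Rightarrow> 'a set. (\<forall>i\<le>k. coarsely_categorical M d (U i)) \<and> M = (\<Union>i\<le>k. U i))"

definition c_cat :: "'a set \<Rightarrow> ('a \<Rightarrow> 'a \<Rightarrow> real) \<Rightarrow> enat" where
  "c_cat M d = (if \<exists>k. ccat_cover M d k then enat (LEAST k. ccat_cover M d k) else \<infinity>)"

end

theory Submission
  imports Defs
begin

definition bdd :: "'a set \<Rightarrow> ('a \<Rightarrow> 'a \<Rightarrow> real) \<Rightarrow> 'a set \<Rightarrow> bool" where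
  "bdd M d S \<longleftrightarrow> S \<subseteq> M \<and> (\<exists>B. \<forall>x\<in>S. \<forall>y\<in>S. d x y \<le> B)"

lemma mb_bdd: "Metric_space M d \<Longrightarrow> Metric_space.mbounded M d S \<longleftrightarrow> bdd M d S"
  by (simp add: Metric_space.mbounded_alt bdd_def)

lemma cyl_mem: "p \<in> cylinder M q \<longleftrightarrow> fst p \<in> M \<and> 0 \<le> snd p \<and> snd p \<le> q (fst p)"
  by (cases p) (auto simp: cylinder_def)

lemma coarse_iff:
  assumes "Metric_space M d" "Metric_space N e"
  shows "coarse_map M d N e f \<longleftrightarrow> f ` M \<subseteq> N \<and> controlled_map M d N e f \<and>
     (\<forall>B. B \<subseteq> N \<longrightarrow> (\<exists>C. \<forall>u\<in>B. \<forall>v\<in>B. e u v \<le> C) \<longrightarrow>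
        (\<exists>D. \<forall>x\<in>M. \<forall>y\<in>M. f x \<in> B \<longrightarrow> f y \<in> B \<longrightarrow> d x y \<le> D))"
  unfolding coarse_map_def proper_map_def mb_bdd[OF assms(1)] mb_bdd[OF assms(2)] bdd_def
  apply (intro conj_cong[OF refl] conj_cong[OF refl] all_cong)
  apply (simp only: Ball_def mem_Collect_eq)
  by blast

lemma coarseI:
  assumes "Metric_space M d" "Metric_space N e" "f ` M \<subseteq> N" "controlled_map M d N e f"
    and P: "\<And>B C. B \<subseteq> N \<Longrightarrow> \<forall>u\<in>B. \<forall>v\<in>B. e u v \<le> C \<Longrightarrow>
        \<exists>D. \<forall>x\<in>M. \<forall>y\<in>M. f x \<in> B \<longrightarrow> f y \<in> B \<longrightarrow> d x y \<le> D"
  shows "coarse_map M d N e f"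
  unfolding coarse_iff[OF assms(1,2)]
  apply (intro conjI allI impI assms(3,4))
  apply (erule exE)
  apply (erule P)
  apply assumption
  done

lemma coarseD:
  assumes "Metric_space M d" "Metric_space N e" "coarse_map M d N e f"
  shows "f ` M \<subseteq> N" "controlled_map M d N e f"
    "\<And>B C. B \<subseteq> N \<Longrightarrow> \<forall>u\<in>B. \<forall>v\<in>B. e u v \<le> C \<Longrightarrow>
        \<exists>D. \<forall>x\<in>M. \<forall>y\<in>M. f x \<in> B \<longrightarrow> f y \<in> B \<longrightarrow> d x y \<le> D"
  using assms(3) unfolding coarse_iff[OF assms(1,2)] by blast+

lemma rp_ms: "Metric_space Rplus dist"
  by (rule Metric_space.intro) (auto simp: dist_commute dist_triangle)

lemma cyl_ms:
  assumes "Metric_space M d"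
  shows "Metric_space (cylinder M q) (cyl_dist d)"
proof (rule Metric_space.intro)
  interpret Metric_space M d by fact
  show "0 \<le> cyl_dist d x y" for x y by (simp add: cyl_dist_def)
  show "cyl_dist d x y = cyl_dist d y x" for x y
    by (simp add: cyl_dist_def commute abs_minus_commute)
  show "x \<in> cylinder M q \<Longrightarrow> y \<in> cylinder M q \<Longrightarrow> (cyl_dist d x y = 0) = (x = y)" for x y
  proof -
    assume xy: "x \<in> cylinder M q" "y \<in> cylinder M q"
    have m: "max a b = 0 \<longleftrightarrow> a = 0 \<and> b = 0" if "0 \<le> a" "0 \<le> b" for a b :: real
      using that by (auto simp: max_def)
    have "cyl_dist d x y = 0 \<longleftrightarrow> d (fst x) (fst y) = 0 \<and> \<bar>snd x - snd y\<bar> = 0"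
      unfolding cyl_dist_def by (rule m) auto
    also have "\<dots> \<longleftrightarrow> fst x = fst y \<and> snd x = snd y" using xy by (simp add: cyl_mem)
    finally show ?thesis by (simp add: prod_eq_iff)
  qed
  show "cyl_dist d x z \<le> cyl_dist d x y + cyl_dist d y z"
    if "x \<in> cylinder M q" "y \<in> cylinder M q" "z \<in> cylinder M q" for x y z
  proof -
    have "d (fst x) (fst z) \<le> d (fst x) (fst y) + d (fst y) (fst z)"
      using that by (intro triangle) (auto simp: cyl_mem)
    moreover have "\<bar>snd x - snd z\<bar> \<le> \<bar>snd x - snd y\<bar> + \<bar>snd y - snd z\<bar>" by arith
    moreover have "d (fst x) (fst y) \<le> cyl_dist d x y" "\<bar>snd x - snd y\<bar> \<le> cyl_dist d x y"
      "d (fst y) (fst z) \<le> cyl_dist d y z" "\<bar>snd y - snd z\<bar> \<le> cyl_dist d y z"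
      by (simp_all add: cyl_dist_def)
    ultimately have "d (fst x) (fst z) \<le> cyl_dist d x y + cyl_dist d y z"
      "\<bar>snd x - snd z\<bar> \<le> cyl_dist d x y + cyl_dist d y z" by linarith+
    then show ?thesis unfolding cyl_dist_def[of d x z] by (rule max.boundedI)
  qed
qed

lemma coarse_comp:
  assumes MM: "Metric_space M d" and NN: "Metric_space N e" and PP: "Metric_space P p"
    and f: "coarse_map M d N e f" and g: "coarse_map N e P p g"
  shows "coarse_map M d P p (g \<circ> f)"
proof -
  have fi: "f ` M \<subseteq> N" and fc: "controlled_map M d N e f"
    and fp: "\<And>B C. B \<subseteq> N \<Longrightarrow> \<forall>u\<in>B. \<forall>v\<in>B. e u v \<le> C \<Longrightarrow>
        \<exists>D. \<forall>x\<in>M. \<forall>y\<in>M. f x \<in> B \<longrightarrow> f y \<in> B \<longrightarrow> d x y \<le> D"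
    using coarseD[OF MM NN f] by blast+
  have gi: "g ` N \<subseteq> P" and gc: "controlled_map N e P p g"
    and gp: "\<And>B C. B \<subseteq> P \<Longrightarrow> \<forall>u\<in>B. \<forall>v\<in>B. p u v \<le> C \<Longrightarrow>
        \<exists>D. \<forall>x\<in>N. \<forall>y\<in>N. g x \<in> B \<longrightarrow> g y \<in> B \<longrightarrow> e x y \<le> D"
    using coarseD[OF NN PP g] by blast+
  have c: "controlled_map M d P p (g \<circ> f)"
    unfolding controlled_map_def
  proof (intro allI impI)
    fix r :: real assume "r > 0"
    then obtain S1 where S1: "S1 > 0" "\<forall>x\<in>M. \<forall>x'\<in>M. d x x' < r \<longrightarrow> e (f x) (f x') < S1"
      using fc unfolding controlled_map_def by blast
    then obtain S2 where S2: "S2 > 0" "\<forall>x\<in>N. \<forall>x'\<in>N. e x x' < S1 \<longrightarrow> p (g x) (g x') < S2"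
      using gc unfolding controlled_map_def by blast
    show "\<exists>S>0. \<forall>x\<in>M. \<forall>x'\<in>M. d x x' < r \<longrightarrow> p ((g \<circ> f) x) ((g \<circ> f) x') < S"
      using S1 S2 fi by (intro exI[of _ S2]) (auto simp: image_subset_iff)
  qed
  have pr: "\<exists>D. \<forall>x\<in>M. \<forall>y\<in>M. (g \<circ> f) x \<in> B \<longrightarrow> (g \<circ> f) y \<in> B \<longrightarrow> d x y \<le> D"
    if B: "B \<subseteq> P" "\<forall>u\<in>B. \<forall>v\<in>B. p u v \<le> C" for B C
  proof -
    obtain D1 where D1: "\<forall>x\<in>N. \<forall>y\<in>N. g x \<in> B \<longrightarrow> g y \<in> B \<longrightarrow> e x y \<le> D1"
      using gp[OF B] by blast
    obtain D2 where D2: "\<forall>x\<in>M. \<forall>y\<in>M. f x \<in> {z\<in>N. g z \<in> B} \<longrightarrow> f y \<in> {z\<in>N. g z \<in> B} \<longrightarrow> d x y \<le> D2"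
    proof -
      have "{z\<in>N. g z \<in> B} \<subseteq> N" by blast
      moreover have "\<forall>u\<in>{z\<in>N. g z \<in> B}. \<forall>v\<in>{z\<in>N. g z \<in> B}. e u v \<le> D1" using D1 by blast
      ultimately show ?thesis using fp that by blast
    qed
    show ?thesis
    proof (intro exI ballI impI)
      fix x y assume "x \<in> M" "y \<in> M" "(g \<circ> f) x \<in> B" "(g \<circ> f) y \<in> B"
      then show "d x y \<le> D2" using D2 fi by (auto simp: image_subset_iff)
    qed
  qed
  have i: "(g \<circ> f) ` M \<subseteq> P" using fi gi by auto
  show ?thesis by (rule coarseI[OF MM PP i c pr])
qed

lemma coarse_restrict:
  assumes MM: "Metric_space M d" and NN: "Metric_space N e" and A: "A \<subseteq> M"
    and f: "coarse_map M d N e f"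
  shows "coarse_map A d N e f"
proof -
  have AA: "Metric_space A d" using Metric_space.subspace[OF MM A] .
  have fi: "f ` M \<subseteq> N" and fc: "controlled_map M d N e f"
    and fp: "\<And>B C. B \<subseteq> N \<Longrightarrow> \<forall>u\<in>B. \<forall>v\<in>B. e u v \<le> C \<Longrightarrow>
        \<exists>D. \<forall>x\<in>M. \<forall>y\<in>M. f x \<in> B \<longrightarrow> f y \<in> B \<longrightarrow> d x y \<le> D"
    using f unfolding coarse_iff[OF MM NN] by blast+
  have i: "f ` A \<subseteq> N" using fi A by blast
  have c: "controlled_map A d N e f"
    unfolding controlled_map_def
  proof (intro allI impI)
    fix r :: real assume "r > 0"
    then obtain S where "S > 0" "\<forall>x\<in>M. \<forall>x'\<in>M. d x x' < r \<longrightarrow> e (f x) (f x') < S"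
      using fc unfolding controlled_map_def by blast
    then show "\<exists>S>0. \<forall>x\<in>A. \<forall>x'\<in>A. d x x' < r \<longrightarrow> e (f x) (f x') < S"
      using A by (intro exI[of _ S]) auto
  qed
  have pr: "\<exists>D. \<forall>x\<in>A. \<forall>y\<in>A. f x \<in> B \<longrightarrow> f y \<in> B \<longrightarrow> d x y \<le> D"
    if hB: "B \<subseteq> N" "\<forall>u\<in>B. \<forall>v\<in>B. e u v \<le> C" for B C
  proof -
    obtain D where "\<forall>x\<in>M. \<forall>y\<in>M. f x \<in> B \<longrightarrow> f y \<in> B \<longrightarrow> d x y \<le> D"
      using fp[OF hB] by blast
    then show ?thesis using A by (intro exI[of _ D]) auto
  qed
  show ?thesis by (rule coarseI[OF AA NN i c pr])
qed

lemma coarse_corestrict: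
  assumes MM: "Metric_space M d" and NN: "Metric_space N e" and A: "f ` M \<subseteq> N'" "N' \<subseteq> N"
    and f: "coarse_map M d N e f"
  shows "coarse_map M d N' e f"
proof -
  have AA: "Metric_space N' e" using Metric_space.subspace[OF NN A(2)] .
  have fc: "controlled_map M d N e f"
    and fp: "\<And>B C. B \<subseteq> N \<Longrightarrow> \<forall>u\<in>B. \<forall>v\<in>B. e u v \<le> C \<Longrightarrow>
        \<exists>D. \<forall>x\<in>M. \<forall>y\<in>M. f x \<in> B \<longrightarrow> f y \<in> B \<longrightarrow> d x y \<le> D"
    using coarseD[OF MM NN f] by blast+
  have c: "controlled_map M d N' e f" using fc unfolding controlled_map_def .
  show ?thesis
  proof (rule coarseI[OF MM AA A(1) c])
    fix B C assume "B \<subseteq> N'" "\<forall>u\<in>B. \<forall>v\<in>B. e u v \<le> C"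
    then show "\<exists>D. \<forall>x\<in>M. \<forall>y\<in>M. f x \<in> B \<longrightarrow> f y \<in> B \<longrightarrow> d x y \<le> D"
      using fp A(2) by blast
  qed
qed

lemma coarse_incl:
  assumes MM: "Metric_space M d" and A: "A \<subseteq> M"
  shows "coarse_map A d M d id"
proof -
  have AA: "Metric_space A d" using Metric_space.subspace[OF MM A] .
  have c: "controlled_map A d M d id" unfolding controlled_map_def by auto
  show ?thesis
  proof (rule coarseI[OF AA MM _ c])
    show "id ` A \<subseteq> M" using A by auto
    fix B C assume "B \<subseteq> M" "\<forall>u\<in>B. \<forall>v\<in>B. d u v \<le> C"
    then show "\<exists>D. \<forall>x\<in>A. \<forall>y\<in>A. id x \<in> B \<longrightarrow> id y \<in> B \<longrightarrow> d x y \<le> D"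
      by (intro exI[of _ C]) auto
  qed
qed


lemma homot_post:
  assumes AA: "Metric_space A d" and MM: "Metric_space M e" and NN: "Metric_space N e'"
    and h: "coarsely_homotopic A d M e \<phi> \<psi>" and f: "coarse_map M e N e' f"
  shows "coarsely_homotopic A d N e' (f \<circ> \<phi>) (f \<circ> \<psi>)"
proof -
  obtain q H where q: "coarse_map A d Rplus dist q" and H: "coarse_map (cylinder A q) (cyl_dist d) M e H"
    and H0: "\<forall>x\<in>A. H (x, 0) = \<phi> x" and H1: "\<forall>x\<in>A. H (x, q x) = \<psi> x"
    using h unfolding coarsely_homotopic_def by blast
  have "coarse_map (cylinder A q) (cyl_dist d) N e' (f \<circ> H)"
    by (rule coarse_comp[OF cyl_ms[OF AA] MM NN H f])
  then show ?thesis unfolding coarsely_homotopic_def using q H0 H1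
    by (intro exI[of _ q] exI[of _ "f \<circ> H"]) auto
qed

lemma cyl_map_coarse:
  assumes AA: "Metric_space A d" and BB: "Metric_space B d'" and g: "coarse_map B d' A d g"
  shows "coarse_map (cylinder B (q \<circ> g)) (cyl_dist d') (cylinder A q) (cyl_dist d) (\<lambda>p. (g (fst p), snd p))"
proof -
  have gi: "g ` B \<subseteq> A" and gc: "controlled_map B d' A d g"
    and gp: "\<And>S C. S \<subseteq> A \<Longrightarrow> \<forall>u\<in>S. \<forall>v\<in>S. d u v \<le> C \<Longrightarrow>
        \<exists>D. \<forall>x\<in>B. \<forall>y\<in>B. g x \<in> S \<longrightarrow> g y \<in> S \<longrightarrow> d' x y \<le> D"
    using coarseD[OF BB AA g] by blast+
  have i: "(\<lambda>p. (g (fst p), snd p)) ` cylinder B (q \<circ> g) \<subseteq> cylinder A q"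
    using gi by (auto simp: cyl_mem image_subset_iff)
  have c: "controlled_map (cylinder B (q \<circ> g)) (cyl_dist d') (cylinder A q) (cyl_dist d) (\<lambda>p. (g (fst p), snd p))"
    unfolding controlled_map_def
  proof (intro allI impI)
    fix r :: real assume "r > 0"
    then obtain S where S: "S > 0" "\<forall>x\<in>B. \<forall>x'\<in>B. d' x x' < r \<longrightarrow> d (g x) (g x') < S"
      using gc unfolding controlled_map_def by blast
    show "\<exists>S'>0. \<forall>p\<in>cylinder B (q \<circ> g). \<forall>p'\<in>cylinder B (q \<circ> g). cyl_dist d' p p' < r \<longrightarrow>
       cyl_dist d (g (fst p), snd p) (g (fst p'), snd p') < S'"
    proof (intro exI[of _ "max S r"] conjI ballI impI)
      show "0 < max S r" using S by simp
      fix p p' assume p: "p \<in> cylinder B (q \<circ> g)" and p': "p' \<in> cylinder B (q \<circ> g)"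
        and pp: "cyl_dist d' p p' < r"
      have a: "d' (fst p) (fst p') < r" "\<bar>snd p - snd p'\<bar> < r" using pp by (auto simp: cyl_dist_def)
      have "d (g (fst p)) (g (fst p')) < S" using S(2) p p' a(1) by (auto simp: cyl_mem)
      then show "cyl_dist d (g (fst p), snd p) (g (fst p'), snd p') < max S r"
        using a(2) by (auto simp: cyl_dist_def less_max_iff_disj)
    qed
  qed
  have pr: "\<exists>D. \<forall>p\<in>cylinder B (q \<circ> g). \<forall>p'\<in>cylinder B (q \<circ> g).
      (g (fst p), snd p) \<in> C \<longrightarrow> (g (fst p'), snd p') \<in> C \<longrightarrow> cyl_dist d' p p' \<le> D"
    if C: "C \<subseteq> cylinder A q" "\<forall>u\<in>C. \<forall>v\<in>C. cyl_dist d u v \<le> c" for C c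
  proof -
    have "fst ` C \<subseteq> A" using C(1) by (auto simp: cyl_mem)
    moreover have "\<forall>u\<in>fst ` C. \<forall>v\<in>fst ` C. d u v \<le> c"
    proof (intro ballI)
      fix u v assume "u \<in> fst ` C" "v \<in> fst ` C"
      then obtain pu pv where "pu \<in> C" "pv \<in> C" "u = fst pu" "v = fst pv" by blast
      then show "d u v \<le> c" using C(2) by (force simp: cyl_dist_def)
    qed
    ultimately obtain D where D: "\<forall>x\<in>B. \<forall>y\<in>B. g x \<in> fst ` C \<longrightarrow> g y \<in> fst ` C \<longrightarrow> d' x y \<le> D"
      using gp by blast
    show ?thesis
    proof (intro exI[of _ "max D c"] ballI impI)
      fix p p' assume p: "p \<in> cylinder B (q \<circ> g)" and p': "p' \<in> cylinder B (q \<circ> g)"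
        and pc: "(g (fst p), snd p) \<in> C" and pc': "(g (fst p'), snd p') \<in> C"
      have "g (fst p) \<in> fst ` C" "g (fst p') \<in> fst ` C" using pc pc' by force+
      then have "d' (fst p) (fst p') \<le> D" using D p p' by (auto simp: cyl_mem)
      moreover have "\<bar>snd p - snd p'\<bar> \<le> c" using C(2) pc pc' by (force simp: cyl_dist_def)
      ultimately show "cyl_dist d' p p' \<le> max D c" by (auto simp: cyl_dist_def le_max_iff_disj)
    qed
  qed
  show ?thesis by (rule coarseI[OF cyl_ms[OF BB] cyl_ms[OF AA] i c pr])
qed

lemma homot_pre:
  assumes AA: "Metric_space A d" and BB: "Metric_space B d'" and MM: "Metric_space M e"
    and h: "coarsely_homotopic A d M e \<phi> \<psi>" and g: "coarse_map B d' A d g"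
  shows "coarsely_homotopic B d' M e (\<phi> \<circ> g) (\<psi> \<circ> g)"
proof -
  obtain q H where q: "coarse_map A d Rplus dist q" and H: "coarse_map (cylinder A q) (cyl_dist d) M e H"
    and H0: "\<forall>x\<in>A. H (x, 0) = \<phi> x" and H1: "\<forall>x\<in>A. H (x, q x) = \<psi> x"
    using h unfolding coarsely_homotopic_def by blast
  have gi: "g ` B \<subseteq> A" using coarseD[OF BB AA g] by blast
  have q': "coarse_map B d' Rplus dist (q \<circ> g)" by (rule coarse_comp[OF BB AA rp_ms g q])
  have H': "coarse_map (cylinder B (q \<circ> g)) (cyl_dist d') M e (H \<circ> (\<lambda>p. (g (fst p), snd p)))"
    by (rule coarse_comp[OF cyl_ms[OF BB] cyl_ms[OF AA] MM cyl_map_coarse[OF AA BB g] H])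
  show ?thesis unfolding coarsely_homotopic_def
    by (intro exI[of _ "q \<circ> g"] exI[of _ "H \<circ> (\<lambda>p. (g (fst p), snd p))"] conjI q' H')
      (use gi H0 H1 in \<open>auto simp: image_subset_iff\<close>)
qed


lemma homot_trans:
  assumes AA: "Metric_space A d" and MM: "Metric_space M e"
    and h1: "coarsely_homotopic A d M e \<phi> \<psi>" and h2: "coarsely_homotopic A d M e \<psi> \<rho>"
  shows "coarsely_homotopic A d M e \<phi> \<rho>"
proof -
  interpret A: Metric_space A d by fact
  interpret M: Metric_space M e by fact
  obtain q1 H1 where q1: "coarse_map A d Rplus dist q1" and H1: "coarse_map (cylinder A q1) (cyl_dist d) M e H1"
    and H10: "\<forall>x\<in>A. H1 (x, 0) = \<phi> x" and H11: "\<forall>x\<in>A. H1 (x, q1 x) = \<psi> x"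
    using h1 unfolding coarsely_homotopic_def by blast
  obtain q2 H2 where q2: "coarse_map A d Rplus dist q2" and H2: "coarse_map (cylinder A q2) (cyl_dist d) M e H2"
    and H20: "\<forall>x\<in>A. H2 (x, 0) = \<psi> x" and H21: "\<forall>x\<in>A. H2 (x, q2 x) = \<rho> x"
    using h2 unfolding coarsely_homotopic_def by blast
  have q1i: "q1 ` A \<subseteq> Rplus" and q1c: "controlled_map A d Rplus dist q1"
    and q1p: "\<And>S C. S \<subseteq> Rplus \<Longrightarrow> \<forall>u\<in>S. \<forall>v\<in>S. dist u v \<le> C \<Longrightarrow>
        \<exists>D. \<forall>x\<in>A. \<forall>y\<in>A. q1 x \<in> S \<longrightarrow> q1 y \<in> S \<longrightarrow> d x y \<le> D"
    using coarseD[OF AA rp_ms q1] by blast+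
  have q2i: "q2 ` A \<subseteq> Rplus" and q2c: "controlled_map A d Rplus dist q2"
    using coarseD[OF AA rp_ms q2] by blast+
  have H1i: "H1 ` cylinder A q1 \<subseteq> M" and H1c: "controlled_map (cylinder A q1) (cyl_dist d) M e H1"
    and H1p: "\<And>S C. S \<subseteq> M \<Longrightarrow> \<forall>u\<in>S. \<forall>v\<in>S. e u v \<le> C \<Longrightarrow>
        \<exists>D. \<forall>x\<in>cylinder A q1. \<forall>y\<in>cylinder A q1. H1 x \<in> S \<longrightarrow> H1 y \<in> S \<longrightarrow> cyl_dist d x y \<le> D"
    using coarseD[OF cyl_ms[OF AA] MM H1] by blast+
  have H2i: "H2 ` cylinder A q2 \<subseteq> M" and H2c: "controlled_map (cylinder A q2) (cyl_dist d) M e H2"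
    and H2p: "\<And>S C. S \<subseteq> M \<Longrightarrow> \<forall>u\<in>S. \<forall>v\<in>S. e u v \<le> C \<Longrightarrow>
        \<exists>D. \<forall>x\<in>cylinder A q2. \<forall>y\<in>cylinder A q2. H2 x \<in> S \<longrightarrow> H2 y \<in> S \<longrightarrow> cyl_dist d x y \<le> D"
    using coarseD[OF cyl_ms[OF AA] MM H2] by blast+
  have q1nn: "\<And>x. x \<in> A \<Longrightarrow> 0 \<le> q1 x" using q1i by auto
  have q2nn: "\<And>x. x \<in> A \<Longrightarrow> 0 \<le> q2 x" using q2i by auto
  define q where "q = (\<lambda>x. q1 x + q2 x)"
  define H where "H = (\<lambda>p. if snd p \<le> q1 (fst p) then H1 p else H2 (fst p, snd p - q1 (fst p)))"

  have qi: "q ` A \<subseteq> Rplus" using q1nn q2nn by (auto simp: q_def)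
  have qc: "controlled_map A d Rplus dist q" unfolding controlled_map_def
  proof (intro allI impI)
    fix r :: real assume "r > 0"
    obtain S1 where S1: "S1 > 0" "\<forall>x\<in>A. \<forall>x'\<in>A. d x x' < r \<longrightarrow> dist (q1 x) (q1 x') < S1"
      using q1c \<open>r > 0\<close> unfolding controlled_map_def by blast
    obtain S2 where S2: "S2 > 0" "\<forall>x\<in>A. \<forall>x'\<in>A. d x x' < r \<longrightarrow> dist (q2 x) (q2 x') < S2"
      using q2c \<open>r > 0\<close> unfolding controlled_map_def by blast
    show "\<exists>S>0. \<forall>x\<in>A. \<forall>x'\<in>A. d x x' < r \<longrightarrow> dist (q x) (q x') < S"
    proof (intro exI[of _ "S1 + S2"] conjI ballI impI)
      show "0 < S1 + S2" using S1 S2 by simp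
      fix x x' assume "x \<in> A" "x' \<in> A" "d x x' < r"
      then have "dist (q1 x) (q1 x') < S1" "dist (q2 x) (q2 x') < S2" using S1 S2 by blast+
      then show "dist (q x) (q x') < S1 + S2" unfolding q_def dist_real_def by arith
    qed
  qed
  have qp: "\<exists>D. \<forall>x\<in>A. \<forall>y\<in>A. q x \<in> S \<longrightarrow> q y \<in> S \<longrightarrow> d x y \<le> D"
    if S: "S \<subseteq> Rplus" "\<forall>u\<in>S. \<forall>v\<in>S. dist u v \<le> C" for S C
  proof (cases "S = {}")
    case True then show ?thesis by auto
  next
    case False
    then obtain b0 where b0: "b0 \<in> S" by blast
    let ?S' = "{u::real. 0 \<le> u \<and> u \<le> b0 + C}"
    have "?S' \<subseteq> Rplus" by auto
    moreover have "\<forall>u\<in>?S'. \<forall>v\<in>?S'. dist u v \<le> b0 + C" by (auto simp: dist_real_def)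
    ultimately obtain D where D: "\<forall>x\<in>A. \<forall>y\<in>A. q1 x \<in> ?S' \<longrightarrow> q1 y \<in> ?S' \<longrightarrow> d x y \<le> D"
      using q1p by blast
    have inS: "q1 x \<in> ?S'" if "x \<in> A" "q x \<in> S" for x
    proof -
      have "dist (q x) b0 \<le> C" using S(2) b0 that by blast
      then have "q x \<le> b0 + C" by (auto simp: dist_real_def)
      then show ?thesis using q1nn[OF that(1)] q2nn[OF that(1)] by (auto simp: q_def)
    qed
    show ?thesis using D inS by blast
  qed
  have qcoarse: "coarse_map A d Rplus dist q" by (rule coarseI[OF AA rp_ms qi qc qp])

  have memq1: "p \<in> cylinder A q1" if "p \<in> cylinder A q" "snd p \<le> q1 (fst p)" for p
    using that by (auto simp: cyl_mem)
  have memq2: "(fst p, snd p - q1 (fst p)) \<in> cylinder A q2" if "p \<in> cylinder A q" "\<not> snd p \<le> q1 (fst p)" for p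
    using that by (auto simp: cyl_mem q_def)
  have Hi: "H ` cylinder A q \<subseteq> M"
  proof
    fix y assume "y \<in> H ` cylinder A q"
    then obtain p where p: "p \<in> cylinder A q" "y = H p" by blast
    show "y \<in> M"
    proof (cases "snd p \<le> q1 (fst p)")
      case True
      then have "p \<in> cylinder A q1" using memq1 p(1) by blast
      then show ?thesis using True p H1i by (auto simp: H_def)
    next
      case False then show ?thesis using p memq2[OF p(1) False] H2i by (auto simp: H_def)
    qed
  qed
  have Hc: "controlled_map (cylinder A q) (cyl_dist d) M e H" unfolding controlled_map_def
  proof (intro allI impI)
    fix r :: real assume "r > 0"
    obtain Sq where Sq: "Sq > 0" "\<forall>x\<in>A. \<forall>x'\<in>A. d x x' < r \<longrightarrow> dist (q1 x) (q1 x') < Sq"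
      using q1c \<open>r > 0\<close> unfolding controlled_map_def by blast
    define R where "R = r + Sq"
    have "R > 0" using Sq \<open>r > 0\<close> by (simp add: R_def)
    obtain S1 where S1: "S1 > 0" "\<forall>p\<in>cylinder A q1. \<forall>p'\<in>cylinder A q1. cyl_dist d p p' < R \<longrightarrow> e (H1 p) (H1 p') < S1"
      using H1c \<open>R > 0\<close> unfolding controlled_map_def by blast
    obtain S2 where S2: "S2 > 0" "\<forall>p\<in>cylinder A q2. \<forall>p'\<in>cylinder A q2. cyl_dist d p p' < R \<longrightarrow> e (H2 p) (H2 p') < S2"
      using H2c \<open>R > 0\<close> unfolding controlled_map_def by blast
    have mixed: "e (H1 (x, t)) (H2 (x', t' - q1 x')) < S1 + S2"
      if x: "x \<in> A" "x' \<in> A" "0 \<le> t" "t \<le> q1 x" "q1 x' < t'" "t' \<le> q x'" "d x x' < r" "\<bar>t - t'\<bar> < r"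
      for x x' t t'
    proof -
      have dq: "\<bar>q1 x - q1 x'\<bar> < Sq" using Sq(2) x by (auto simp: dist_real_def)
      have m1: "(x, t) \<in> cylinder A q1" "(x, q1 x) \<in> cylinder A q1" using x q1nn by (auto simp: cyl_mem)
      have "cyl_dist d (x, t) (x, q1 x) < R"
        using x dq by (auto simp: cyl_dist_def R_def)
      then have e1: "e (H1 (x, t)) (H1 (x, q1 x)) < S1" using S1(2) m1 by blast
      have eq: "H1 (x, q1 x) = H2 (x, 0)" using H11 H20 x by auto
      have m2: "(x, 0) \<in> cylinder A q2" "(x', t' - q1 x') \<in> cylinder A q2"
        using x q2nn by (auto simp: cyl_mem q_def)
      have "cyl_dist d (x, 0) (x', t' - q1 x') < R"
        using x dq Sq(1) by (auto simp: cyl_dist_def R_def)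
      then have e2: "e (H2 (x, 0)) (H2 (x', t' - q1 x')) < S2" using S2(2) m2 by blast
      have inM: "H1 (x, t) \<in> M" "H2 (x, 0) \<in> M" "H2 (x', t' - q1 x') \<in> M"
        using m1 m2 H1i H2i by auto
      have "e (H1 (x, t)) (H2 (x', t' - q1 x')) \<le> e (H1 (x, t)) (H2 (x, 0)) + e (H2 (x, 0)) (H2 (x', t' - q1 x'))"
        using M.triangle inM by blast
      then show ?thesis using e1 e2 eq by simp
    qed
    show "\<exists>S>0. \<forall>p\<in>cylinder A q. \<forall>p'\<in>cylinder A q. cyl_dist d p p' < r \<longrightarrow> e (H p) (H p') < S"
    proof (intro exI[of _ "S1 + S2"] conjI ballI impI)
      show "0 < S1 + S2" using S1 S2 by simp
      fix p p' assume p: "p \<in> cylinder A q" and p': "p' \<in> cylinder A q" and pp: "cyl_dist d p p' < r"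
      obtain x t where pxt: "p = (x, t)" by (cases p)
      obtain x' t' where pxt': "p' = (x', t')" by (cases p')
      have x: "x \<in> A" "0 \<le> t" "t \<le> q x" "x' \<in> A" "0 \<le> t'" "t' \<le> q x'"
        using p p' pxt pxt' by (auto simp: cyl_mem)
      have dd: "d x x' < r" "\<bar>t - t'\<bar> < r" using pp pxt pxt' by (auto simp: cyl_dist_def)
      have dq: "\<bar>q1 x - q1 x'\<bar> < Sq" using Sq(2) x dd by (auto simp: dist_real_def)
      show "e (H p) (H p') < S1 + S2"
      proof (cases "t \<le> q1 x"; cases "t' \<le> q1 x'")
        assume a: "t \<le> q1 x" "t' \<le> q1 x'"
        have "(x, t) \<in> cylinder A q1" "(x', t') \<in> cylinder A q1" using a x by (auto simp: cyl_mem)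
        moreover have "cyl_dist d (x, t) (x', t') < R" using pp pxt pxt' Sq(1) by (simp add: R_def)
        ultimately have "e (H1 (x, t)) (H1 (x', t')) < S1" using S1(2) by blast
        then show ?thesis using a pxt pxt' S2(1) by (simp add: H_def)
      next
        assume a: "t \<le> q1 x" "\<not> t' \<le> q1 x'"
        have "e (H1 (x, t)) (H2 (x', t' - q1 x')) < S1 + S2"
          using mixed x dd a by simp
        then show ?thesis using a pxt pxt' by (simp add: H_def)
      next
        assume a: "\<not> t \<le> q1 x" "t' \<le> q1 x'"
        have "e (H1 (x', t')) (H2 (x, t - q1 x)) < S1 + S2"
          using mixed[of x' x t' t] x dd a by (simp add: A.commute abs_minus_commute)
        then show ?thesis using a pxt pxt' by (simp add: H_def M.commute)
      next
        assume a: "\<not> t \<le> q1 x" "\<not> t' \<le> q1 x'"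
        have "(x, t - q1 x) \<in> cylinder A q2" "(x', t' - q1 x') \<in> cylinder A q2"
          using a x by (auto simp: cyl_mem q_def)
        moreover have "cyl_dist d (x, t - q1 x) (x', t' - q1 x') < R"
          using dd dq Sq(1) by (auto simp: cyl_dist_def R_def)
        ultimately have "e (H2 (x, t - q1 x)) (H2 (x', t' - q1 x')) < S2" using S2(2) by blast
        then show ?thesis using a pxt pxt' S1(1) by (simp add: H_def)
      qed
    qed
  qed
  have Hp: "\<exists>D. \<forall>p\<in>cylinder A q. \<forall>p'\<in>cylinder A q. H p \<in> S \<longrightarrow> H p' \<in> S \<longrightarrow> cyl_dist d p p' \<le> D"
    if S: "S \<subseteq> M" "\<forall>u\<in>S. \<forall>v\<in>S. e u v \<le> C" for S C
  proof -
    obtain D1 where D1: "\<forall>p\<in>cylinder A q1. \<forall>p'\<in>cylinder A q1. H1 p \<in> S \<longrightarrow> H1 p' \<in> S \<longrightarrow> cyl_dist d p p' \<le> D1"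
      using H1p[OF S] by blast
    obtain D2 where D2: "\<forall>p\<in>cylinder A q2. \<forall>p'\<in>cylinder A q2. H2 p \<in> S \<longrightarrow> H2 p' \<in> S \<longrightarrow> cyl_dist d p p' \<le> D2"
      using H2p[OF S] by blast
    obtain Sq where Sq: "Sq > 0" "\<forall>x\<in>A. \<forall>x'\<in>A. d x x' < \<bar>D2\<bar> + 1 \<longrightarrow> dist (q1 x) (q1 x') < Sq"
      using q1c unfolding controlled_map_def by (meson abs_ge_zero add_nonneg_pos zero_less_one)
    define P1 where "P1 = {p \<in> cylinder A q. snd p \<le> q1 (fst p) \<and> H p \<in> S}"
    define P2 where "P2 = {p \<in> cylinder A q. \<not> snd p \<le> q1 (fst p) \<and> H p \<in> S}"
    have b1: "bdd (cylinder A q) (cyl_dist d) P1"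
      unfolding bdd_def
    proof (intro conjI exI[of _ D1] ballI)
      show "P1 \<subseteq> cylinder A q" by (auto simp: P1_def)
      fix p p' assume "p \<in> P1" "p' \<in> P1"
      then have "p \<in> cylinder A q1" "p' \<in> cylinder A q1" "H1 p \<in> S" "H1 p' \<in> S"
        using memq1 by (auto simp: P1_def H_def)
      then show "cyl_dist d p p' \<le> D1" using D1 by blast
    qed
    have b2: "bdd (cylinder A q) (cyl_dist d) P2"
      unfolding bdd_def
    proof (intro conjI exI[of _ "\<bar>D2\<bar> + Sq"] ballI)
      show "P2 \<subseteq> cylinder A q" by (auto simp: P2_def)
      fix p p' assume pp: "p \<in> P2" "p' \<in> P2"
      obtain x t where pxt: "p = (x, t)" by (cases p)
      obtain x' t' where pxt': "p' = (x', t')" by (cases p')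
      have m: "(x, t - q1 x) \<in> cylinder A q2" "(x', t' - q1 x') \<in> cylinder A q2"
        "H2 (x, t - q1 x) \<in> S" "H2 (x', t' - q1 x') \<in> S"
        using pp memq2 pxt pxt' by (auto simp: P2_def H_def)
      then have "cyl_dist d (x, t - q1 x) (x', t' - q1 x') \<le> D2" using D2 by blast
      then have a: "d x x' \<le> D2" "\<bar>(t - q1 x) - (t' - q1 x')\<bar> \<le> D2" by (auto simp: cyl_dist_def)
      have "x \<in> A" "x' \<in> A" using m by (auto simp: cyl_mem)
      then have "\<bar>q1 x - q1 x'\<bar> < Sq" using Sq(2) a(1) by (auto simp: dist_real_def)
      then show "cyl_dist d p p' \<le> \<bar>D2\<bar> + Sq" using a Sq(1) pxt pxt' by (auto simp: cyl_dist_def)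
    qed
    have "Metric_space.mbounded (cylinder A q) (cyl_dist d) (P1 \<union> P2)"
      using b1 b2 Metric_space.mbounded_Un[OF cyl_ms[OF AA]] mb_bdd[OF cyl_ms[OF AA]] by blast
    then have "bdd (cylinder A q) (cyl_dist d) (P1 \<union> P2)" using mb_bdd[OF cyl_ms[OF AA]] by blast
    then obtain D where D: "\<forall>p\<in>P1 \<union> P2. \<forall>p'\<in>P1 \<union> P2. cyl_dist d p p' \<le> D" unfolding bdd_def by blast
    show ?thesis
    proof (intro exI[of _ D] ballI impI)
      fix p p' assume "p \<in> cylinder A q" "p' \<in> cylinder A q" "H p \<in> S" "H p' \<in> S"
      then have "p \<in> P1 \<union> P2" "p' \<in> P1 \<union> P2" by (auto simp: P1_def P2_def)
      then show "cyl_dist d p p' \<le> D" using D by blast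
    qed
  qed
  have Hcoarse: "coarse_map (cylinder A q) (cyl_dist d) M e H"
    by (rule coarseI[OF cyl_ms[OF AA] MM Hi Hc Hp])
  have e0: "H (x, 0) = \<phi> x" if "x \<in> A" for x
    using that q1nn H10 by (simp add: H_def)
  have e1: "H (x, q x) = \<rho> x" if x: "x \<in> A" for x
  proof (cases "q x \<le> q1 x")
    case True
    then have "q2 x = 0" "q x = q1 x" using q2nn[OF x] by (auto simp: q_def)
    then show ?thesis using True H11 H20 H21 x by (simp add: H_def) metis
  next
    case False then show ?thesis using H21 x by (simp add: H_def q_def)
  qed
  show ?thesis unfolding coarsely_homotopic_def
    using qcoarse Hcoarse e0 e1 by blast
qed


lemma cat_transfer:
  fixes X :: "'a set" and Y :: "'b set"
  assumes XX: "Metric_space X dX" and YY: "Metric_space Y dY"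
    and f: "coarse_map X dX Y dY f" and g: "coarse_map Y dY X dX g"
    and K: "coarsely_homotopic Y dY Y dY (f \<circ> g) id"
    and U: "coarsely_categorical X dX U"
  shows "coarsely_categorical Y dY {y\<in>Y. g y \<in> U}"
proof -
  define V where "V = {y\<in>Y. g y \<in> U}"
  have VY: "V \<subseteq> Y" by (auto simp: V_def)
  obtain \<alpha> j where UX: "U \<subseteq> X" and \<alpha>: "coarse_map Rplus dist X dX \<alpha>" and j: "coarse_map U dX Rplus dist j"
    and h: "coarsely_homotopic U dX X dX (\<alpha> \<circ> j) id"
    using U unfolding coarsely_categorical_def by blast
  have UU: "Metric_space U dX" using Metric_space.subspace[OF XX UX] .
  have VV: "Metric_space V dY" using Metric_space.subspace[OF YY VY] .
  have gV0: "coarse_map V dY X dX g" by (rule coarse_restrict[OF YY XX VY g])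
  have gVU: "g ` V \<subseteq> U" by (auto simp: V_def)
  have gV: "coarse_map V dY U dX g" by (rule coarse_corestrict[OF VV XX gVU UX gV0])
  have \<alpha>': "coarse_map Rplus dist Y dY (f \<circ> \<alpha>)" by (rule coarse_comp[OF rp_ms XX YY \<alpha> f])
  have j': "coarse_map V dY Rplus dist (j \<circ> g)" by (rule coarse_comp[OF VV UU rp_ms gV j])
  have h1: "coarsely_homotopic V dY X dX ((\<alpha> \<circ> j) \<circ> g) (id \<circ> g)" by (rule homot_pre[OF UU VV XX h gV])
  have h2: "coarsely_homotopic V dY Y dY (f \<circ> ((\<alpha> \<circ> j) \<circ> g)) (f \<circ> (id \<circ> g))"
    by (rule homot_post[OF VV XX YY h1 f])
  have h3: "coarsely_homotopic V dY Y dY ((f \<circ> g) \<circ> id) (id \<circ> id)"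
    by (rule homot_pre[OF YY VV YY K coarse_incl[OF YY VY]])
  have e1: "(f \<circ> g) \<circ> id = f \<circ> (id \<circ> g)" by (simp add: fun_eq_iff)
  have e2: "(id :: 'b \<Rightarrow> 'b) \<circ> id = id" by simp
  have h3': "coarsely_homotopic V dY Y dY (f \<circ> (id \<circ> g)) id" using h3 unfolding e1 e2 .
  have h4: "coarsely_homotopic V dY Y dY (f \<circ> ((\<alpha> \<circ> j) \<circ> g)) id" by (rule homot_trans[OF VV YY h2 h3'])
  have e3: "(f \<circ> \<alpha>) \<circ> (j \<circ> g) = f \<circ> ((\<alpha> \<circ> j) \<circ> g)" by (simp add: fun_eq_iff)
  have "coarsely_categorical Y dY V"
    unfolding coarsely_categorical_def
    using VY \<alpha>' j' h4 unfolding e3[symmetric] by blast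
  then show ?thesis by (simp add: V_def)
qed

lemma cover_transfer:
  fixes X :: "'a set" and Y :: "'b set"
  assumes XX: "Metric_space X dX" and YY: "Metric_space Y dY"
    and f: "coarse_map X dX Y dY f" and g: "coarse_map Y dY X dX g"
    and K: "coarsely_homotopic Y dY Y dY (f \<circ> g) id"
    and C: "ccat_cover X dX k"
  shows "ccat_cover Y dY k"
proof -
  obtain U where U: "\<forall>i\<le>k. coarsely_categorical X dX (U i)" and XU: "X = (\<Union>i\<le>k. U i)"
    using C unfolding ccat_cover_def by blast
  have gi: "g ` Y \<subseteq> X" using coarseD[OF YY XX g] by blast
  define V where "V = (\<lambda>i. {y\<in>Y. g y \<in> U i})"
  have "\<forall>i\<le>k. coarsely_categorical Y dY (V i)"
    using cat_transfer[OF XX YY f g K] U by (simp add: V_def)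
  moreover have "Y = (\<Union>i\<le>k. V i)"
  proof
    show "Y \<subseteq> (\<Union>i\<le>k. V i)"
    proof
      fix y assume "y \<in> Y"
      then have "g y \<in> X" using gi by blast
      then obtain i where "i \<le> k" "g y \<in> U i" using XU by blast
      then show "y \<in> (\<Union>i\<le>k. V i)" using \<open>y \<in> Y\<close> by (auto simp: V_def)
    qed
    show "(\<Union>i\<le>k. V i) \<subseteq> Y" by (auto simp: V_def)
  qed
  ultimately show ?thesis unfolding ccat_cover_def by blast
qed

theorem proposition2p16:
  fixes X :: "'a set" and dX :: "'a \<Rightarrow> 'a \<Rightarrow> real"
    and Y :: "'b set" and dY :: "'b \<Rightarrow> 'b \<Rightarrow> real"
  assumes "Metric_space X dX" and "Metric_space Y dY"
    and "coarse_homotopy_equivalent X dX Y dY"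
  shows "c_cat X dX = c_cat Y dY"
proof -
  obtain f g where f: "coarse_map X dX Y dY f" and g: "coarse_map Y dY X dX g"
    and hX: "coarsely_homotopic X dX X dX (g \<circ> f) id"
    and hY: "coarsely_homotopic Y dY Y dY (f \<circ> g) id"
    using assms(3) unfolding coarse_homotopy_equivalent_def by blast
  have eq: "ccat_cover X dX k \<longleftrightarrow> ccat_cover Y dY k" for k
    using cover_transfer[OF assms(1,2) f g hY, of k] cover_transfer[OF assms(2,1) g f hX, of k] by blast
  show ?thesis unfolding c_cat_def eq ..
qed

end
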